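(* For CUs $\mathcal M=\{1,\dots,M\}$, D2D pairs $\mathcal N=\{1,\dots,N\}$, values $v_{mn}$ and price-step $\epsilon>0$, the computational complexity of the Distributed Matching Algorithm (DMA) described in the context is $\mathcal O\!\left(\frac{MNV_{max}}{\epsilon}\right)$, where $V_{max}=\max_{m,n}v_{mn}$.
   Context: Values: $v_{mn}=w_nu_{mn}$, where $w_n$ is a given weight and $u_{mn}$ is the optimal value of $\max_\pi\mathbb{E}\{\pi(\mathbf r_{mn})r^D_{mn}\}$ s.t. $\mathbb{E}\{(1-\pi(\mathbf r_{mn}))r^C_{mn}\}\ge r_{th}$ (policies $\pi$ map the random state $(r^C_{mn},r^D_{mn})$ of nonnegative rates to $[0,1]$) if feasible, $u_{mn}=-1$ otherwise. DMA: demand function $D_n(\boldsymbol\beta)=\arg\max_{m}(v_{mn}-\beta_m)$ if $\max_m(v_{mn}-\beta_m)\ge0$, else $0$ (no ties assumed). Initialize $t=1$, $p_m=\beta^1_m=0$, all CUs unmatched ($\mu^0(m)=0$). Iteration $t$: (i) each unmatched D2D pair $n$ computes $m=D_n(\boldsymbol\beta^t)$; if $m\ne0$ it proposes to CU $m$ ($g^t_{mn}=1$), else it makes no proposal and stays unmatched. (ii) For each CU $m$: if $\sum_ng^t_{mn}=0$, $\sum_ng^{t-1}_{mn}>0$ and $m$ is unmatched, match $m$ to a random $n^*$ with $g^{t-1}_{mn^*}=1$, set $p_m=\beta^{t-1}_m$, $\beta^{t+1}_m=\beta^t_m$, and set $g^t_{m^*n^*}=0$ for $m^*=D_{n^*}(\boldsymbol\beta^t)$.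 (iii) For each CU $m$: if $\sum_ng^t_{mn}=1$ and ($m$ was unmatched at $t-1$ or $p_m<\beta^t_m$), match $m$ to the proposer, set $p_m=\beta^t_m$, $\beta^{t+1}_m=\beta^t_m$; else if $\sum_ng^t_{mn}\ge1$, make $m$ unmatched, and if its previous partner $n\ne0$ had $p_m=\beta^t_m$ set $g^t_{mn}=1$, and set $\beta^{t+1}_m=\beta^t_m+\epsilon$; otherwise $\beta^{t+1}_m=\beta^t_m$. (iv) $t\leftarrow t+1$; stop when an iteration has no proposal. *)

theory Defs
  imports Main "HOL.Real"
begin

text \<open>
  CUs are indexed by 1..M, D2D pairs by 1..N, the value of CU m for pair n
  is v m n.  A state describes the situation at the beginning of iteration t:
  the current prices beta^t, the previous prices beta^(t-1), the prices p,
  the matching mu^(t-1) (CU m is matched to pair match m, 0 = unmatched), and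
  the proposal indicators g^(t-1) (after all modifications of iteration t-1).
\<close>

record dma_state =
  beta :: "nat \<Rightarrow> real"
  beta_prev :: "nat \<Rightarrow> real"
  price :: "nat \<Rightarrow> real"
  mtch :: "nat \<Rightarrow> nat"
  gprev :: "nat \<Rightarrow> nat \<Rightarrow> bool"

definition dma_init :: dma_state where
  "dma_init = \<lparr> beta = (\<lambda>_. 0), beta_prev = (\<lambda>_. 0), price = (\<lambda>_. 0),
                mtch = (\<lambda>_. 0), gprev = (\<lambda>_ _. False) \<rparr>"

text \<open>Demand function D_n(beta): an argmax of v m n - beta m if the maximum is
  nonnegative, else 0 (ties are excluded by hypothesis in the theorem).\<close>
definition demand :: "nat \<Rightarrow> (nat \<Rightarrow> nat \<Rightarrow> real) \<Rightarrow> (nat \<Rightarrow> real) \<Rightarrow> nat \<Rightarrow> nat" where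
  "demand M v b n =
     (if \<exists>m\<in>{1..M}. v m n - b m \<ge> 0
      then (SOME m. m \<in> {1..M} \<and> (\<forall>m'\<in>{1..M}. v m' n - b m' \<le> v m n - b m))
      else 0)"

definition no_ties :: "nat \<Rightarrow> nat \<Rightarrow> (nat \<Rightarrow> nat \<Rightarrow> real) \<Rightarrow> (nat \<Rightarrow> real) \<Rightarrow> bool" where
  "no_ties M N v b =
     (\<forall>n\<in>{1..N}. \<forall>m1\<in>{1..M}. \<forall>m2\<in>{1..M}.
        (\<forall>m'\<in>{1..M}. v m' n - b m' \<le> v m1 n - b m1) \<longrightarrow>
        (\<forall>m'\<in>{1..M}. v m' n - b m' \<le> v m2 n - b m2) \<longrightarrow> m1 = m2)"

definition d2d_unmatched :: "nat \<Rightarrow> (nat \<Rightarrow> nat) \<Rightarrow> nat \<Rightarrow> bool" where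
  "d2d_unmatched M mu n = (\<forall>m\<in>{1..M}. mu m \<noteq> n)"

definition props :: "nat \<Rightarrow> nat \<Rightarrow> (nat \<Rightarrow> nat \<Rightarrow> real) \<Rightarrow> dma_state \<Rightarrow> nat \<Rightarrow> nat \<Rightarrow> bool" where
  "props M N v s m n =
     (m \<in> {1..M} \<and> n \<in> {1..N} \<and> d2d_unmatched M (mtch s) n \<and> demand M v (beta s) n = m)"

definition no_proposal :: "nat \<Rightarrow> nat \<Rightarrow> (nat \<Rightarrow> nat \<Rightarrow> real) \<Rightarrow> dma_state \<Rightarrow> bool" where
  "no_proposal M N v s = (\<forall>m n. \<not> props M N v s m n)"

definition cnt :: "nat \<Rightarrow> (nat \<Rightarrow> nat \<Rightarrow> bool) \<Rightarrow> nat \<Rightarrow> nat" where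
  "cnt N g m = card {n \<in> {1..N}. g m n}"

text \<open>Step (ii) applies to CU m (all CUs act in parallel on the proposals of step (i)).\<close>
definition case_ii :: "nat \<Rightarrow> nat \<Rightarrow> (nat \<Rightarrow> nat \<Rightarrow> real) \<Rightarrow> dma_state \<Rightarrow> nat \<Rightarrow> bool" where
  "case_ii M N v s m =
     (m \<in> {1..M} \<and> cnt N (props M N v s) m = 0 \<and> cnt N (gprev s) m > 0 \<and> mtch s m = 0)"

text \<open>Proposals after the removals of step (ii); ch m is the random choice n* of CU m.\<close>
definition props2 :: "nat \<Rightarrow> nat \<Rightarrow> (nat \<Rightarrow> nat \<Rightarrow> real) \<Rightarrow> (nat \<Rightarrow> nat) \<Rightarrow> dma_state \<Rightarrow> nat \<Rightarrow> nat \<Rightarrow> bool" where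
  "props2 M N v ch s m n =
     (props M N v s m n \<and>
      \<not> (\<exists>m'. case_ii M N v s m' \<and> ch m' = n \<and> m = demand M v (beta s) n))"

definition acc_iii :: "nat \<Rightarrow> nat \<Rightarrow> (nat \<Rightarrow> nat \<Rightarrow> real) \<Rightarrow> (nat \<Rightarrow> nat) \<Rightarrow> dma_state \<Rightarrow> nat \<Rightarrow> bool" where
  "acc_iii M N v ch s m =
     (m \<in> {1..M} \<and> \<not> case_ii M N v s m \<and> cnt N (props2 M N v ch s) m = 1 \<and>
      (mtch s m = 0 \<or> price s m < beta s m))"

definition rej_iii :: "nat \<Rightarrow> nat \<Rightarrow> (nat \<Rightarrow> nat \<Rightarrow> real) \<Rightarrow> (nat \<Rightarrow> nat) \<Rightarrow> dma_state \<Rightarrow> nat \<Rightarrow> bool" where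
  "rej_iii M N v ch s m =
     (m \<in> {1..M} \<and> \<not> case_ii M N v s m \<and> \<not> acc_iii M N v ch s m \<and>
      cnt N (props2 M N v ch s) m \<ge> 1)"

definition dma_iter :: "nat \<Rightarrow> nat \<Rightarrow> (nat \<Rightarrow> nat \<Rightarrow> real) \<Rightarrow> real \<Rightarrow> (nat \<Rightarrow> nat) \<Rightarrow> dma_state \<Rightarrow> dma_state" where
  "dma_iter M N v eps ch s =
     (let g2 = props2 M N v ch s in
      \<lparr> beta = (\<lambda>m. if rej_iii M N v ch s m then beta s m + eps else beta s m),
        beta_prev = beta s,
        price = (\<lambda>m. if case_ii M N v s m then beta_prev s m
                     else if acc_iii M N v ch s m then beta s m
                     else price s m),
        mtch = (\<lambda>m. if case_ii M N v s m then ch m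
                    else if acc_iii M N v ch s m then (THE n. n \<in> {1..N} \<and> g2 m n)
                    else if rej_iii M N v ch s m then 0
                    else mtch s m),
        gprev = (\<lambda>m n. g2 m n \<or>
                   (rej_iii M N v ch s m \<and> n = mtch s m \<and> n \<noteq> 0 \<and> price s m = beta s m)) \<rparr>)"

text \<open>Transition relation: the random choices n* are arbitrary admissible ones.\<close>
definition dma_step :: "nat \<Rightarrow> nat \<Rightarrow> (nat \<Rightarrow> nat \<Rightarrow> real) \<Rightarrow> real \<Rightarrow> dma_state \<Rightarrow> dma_state \<Rightarrow> bool" where
  "dma_step M N v eps s s' =
     (\<exists>ch. (\<forall>m. case_ii M N v s m \<longrightarrow> ch m \<in> {1..N} \<and> gprev s m (ch m)) \<and>
           s' = dma_iter M N v eps ch s)"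

end

theory Submission
  imports Defs
begin

lemma demand_nonneg:
  assumes d: "demand M v b n = m" and m: "m \<in> {1..M}"
  shows "v m n - b m \<ge> 0"
proof -
  have ex: "\<exists>m0\<in>{1..M}. v m0 n - b m0 \<ge> 0"
  proof (rule ccontr)
    assume "\<not> ?thesis"
    then have "demand M v b n = 0" unfolding demand_def by auto
    with d m show False by auto
  qed
  then obtain m0 where m0: "m0 \<in> {1..M}" "v m0 n - b m0 \<ge> 0" by blast
  define S where "S = (\<lambda>m. v m n - b m) ` {1..M}"
  have fS: "finite S" "S \<noteq> {}" using m0 unfolding S_def by auto
  then have "Max S \<in> S" by (rule Max_in)
  then obtain mx where mx: "mx \<in> {1..M}" "v mx n - b mx = Max S" unfolding S_def by auto
  have "\<forall>m'\<in>{1..M}. v m' n - b m' \<le> v mx n - b mx"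
    using fS mx unfolding S_def by auto
  then have ex2: "\<exists>m. m \<in> {1..M} \<and> (\<forall>m'\<in>{1..M}. v m' n - b m' \<le> v m n - b m)"
    using mx by blast
  have "demand M v b n = (SOME m. m \<in> {1..M} \<and> (\<forall>m'\<in>{1..M}. v m' n - b m' \<le> v m n - b m))"
    using ex unfolding demand_def by simp
  then have "m \<in> {1..M} \<and> (\<forall>m'\<in>{1..M}. v m' n - b m' \<le> v m n - b m)"
    using d someI_ex[OF ex2] by simp
  then show ?thesis using m0 by force
qed

lemma cnt_pos_ex: "cnt N g m \<ge> 1 \<Longrightarrow> \<exists>n\<in>{1..N}. g m n"
  unfolding cnt_def by (metis (no_types, lifting) card.empty empty_Collect_eq mem_Collect_eq not_one_le_zero)

lemma cnt_pos: "n \<in> {1..N} \<Longrightarrow> g m n \<Longrightarrow> cnt N g m \<ge> 1"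
proof -
  assume a: "n \<in> {1..N}" "g m n"
  have "finite {n \<in> {1..N}. g m n}" by auto
  moreover have "{n \<in> {1..N}. g m n} \<noteq> {}" using a by auto
  ultimately show ?thesis unfolding cnt_def by (simp add: Suc_le_eq card_gt_0_iff)
qed

lemma cnt_one_the:
  assumes "cnt N g m = 1" "n \<in> {1..N}" "g m n"
  shows "(THE n. n \<in> {1..N} \<and> g m n) = n"
proof -
  from assms(1) obtain a where A: "{n \<in> {1..N}. g m n} = {a}"
    unfolding cnt_def by (auto simp: card_1_singleton_iff)
  then have "n = a" using assms(2,3) by auto
  show ?thesis
    by (rule the_equality) (use A assms(2,3) \<open>n = a\<close> in blast)+
qed

lemma iter_simps:
  "beta (dma_iter M N v eps ch s) = (\<lambda>m. if rej_iii M N v ch s m then beta s m + eps else beta s m)"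
  "beta_prev (dma_iter M N v eps ch s) = beta s"
  "price (dma_iter M N v eps ch s) = (\<lambda>m. if case_ii M N v s m then beta_prev s m
                     else if acc_iii M N v ch s m then beta s m else price s m)"
  "mtch (dma_iter M N v eps ch s) = (\<lambda>m. if case_ii M N v s m then ch m
                    else if acc_iii M N v ch s m then (THE n. n \<in> {1..N} \<and> props2 M N v ch s m n)
                    else if rej_iii M N v ch s m then 0
                    else mtch s m)"
  by (simp_all add: dma_iter_def Let_def)

lemma excl:
  "acc_iii M N v ch s m \<Longrightarrow> \<not> case_ii M N v s m"
  "rej_iii M N v ch s m \<Longrightarrow> \<not> case_ii M N v s m \<and> \<not> acc_iii M N v ch s m"
  unfolding acc_iii_def rej_iii_def by auto

definition inv :: "nat \<Rightarrow> real \<Rightarrow> real \<Rightarrow> dma_state \<Rightarrow> bool" where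
  "inv M eps V s = (\<forall>m. (beta s m = beta_prev s m \<or> beta s m = beta_prev s m + eps) \<and>
      beta_prev s m \<le> beta s m \<and>
      (price s m = beta s m \<or> price s m \<le> beta s m - eps) \<and>
      price s m \<le> beta_prev s m \<and>
      (m \<in> {1..M} \<longrightarrow> beta s m \<le> max 0 (V + eps)))"

lemma rej_bound:
  assumes "rej_iii M N v ch s m" "\<forall>m\<in>{1..M}. \<forall>n\<in>{1..N}. v m n \<le> V"
  shows "beta s m \<le> V"
proof -
  have m: "m \<in> {1..M}" and "cnt N (props2 M N v ch s) m \<ge> 1"
    using assms(1) unfolding rej_iii_def by auto
  then obtain n where n: "n \<in> {1..N}" "props2 M N v ch s m n" using cnt_pos_ex by blast
  then have "demand M v (beta s) n = m" unfolding props2_def props_def by auto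
  then have "v m n - beta s m \<ge> 0" using demand_nonneg m by blast
  with assms(2) m n show ?thesis by force
qed

lemma inv_init: "inv M eps V dma_init"
  unfolding inv_def dma_init_def by simp

lemma inv_step:
  assumes eps: "eps > 0" and V: "\<forall>m\<in>{1..M}. \<forall>n\<in>{1..N}. v m n \<le> V"
    and I: "inv M eps V s"
  shows "inv M eps V (dma_iter M N v eps ch s)"
  unfolding inv_def
proof (intro allI)
  fix m
  have Im: "(beta s m = beta_prev s m \<or> beta s m = beta_prev s m + eps) \<and>
      beta_prev s m \<le> beta s m \<and>
      (price s m = beta s m \<or> price s m \<le> beta s m - eps) \<and>
      price s m \<le> beta_prev s m \<and>
      (m \<in> {1..M} \<longrightarrow> beta s m \<le> max 0 (V + eps))" using I unfolding inv_def by blast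
  show "(beta (dma_iter M N v eps ch s) m = beta_prev (dma_iter M N v eps ch s) m \<or>
        beta (dma_iter M N v eps ch s) m = beta_prev (dma_iter M N v eps ch s) m + eps) \<and>
       beta_prev (dma_iter M N v eps ch s) m \<le> beta (dma_iter M N v eps ch s) m \<and>
       (price (dma_iter M N v eps ch s) m = beta (dma_iter M N v eps ch s) m \<or>
        price (dma_iter M N v eps ch s) m \<le> beta (dma_iter M N v eps ch s) m - eps) \<and>
       price (dma_iter M N v eps ch s) m \<le> beta_prev (dma_iter M N v eps ch s) m \<and>
       (m \<in> {1..M} \<longrightarrow> beta (dma_iter M N v eps ch s) m \<le> max 0 (V + eps))"
  proof (cases "rej_iii M N v ch s m")
    case True
    have "beta s m \<le> V" using rej_bound[OF True V] .
    then show ?thesis using True excl(2)[OF True] Im eps unfolding iter_simps by auto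
  next
    case nr: False
    show ?thesis
    proof (cases "case_ii M N v s m")
      case True
      then show ?thesis using nr Im eps unfolding iter_simps by auto
    next
      case False
      then show ?thesis using nr Im eps unfolding iter_simps by auto
    qed
  qed
qed

definition Mt :: "nat \<Rightarrow> nat \<Rightarrow> dma_state \<Rightarrow> nat set" where
  "Mt M N s = {n \<in> {1..N}. \<exists>m\<in>{1..M}. mtch s m = n}"

definition phi :: "nat \<Rightarrow> nat \<Rightarrow> real \<Rightarrow> dma_state \<Rightarrow> real" where
  "phi M N eps s = real (card (Mt M N s)) + (\<Sum>m\<in>{1..M}. 2 * beta s m + price s m) / eps"


lemma Mt_sub: "Mt M N s \<subseteq> {1..N}" unfolding Mt_def by auto

lemma phi_step:
  assumes eps: "eps > 0" and I: "inv M eps V s" and np: "\<not> no_proposal M N v s"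
  shows "phi M N eps (dma_iter M N v eps ch s) \<ge> phi M N eps s + 1"
proof -
  define s' where "s' = dma_iter M N v eps ch s"
  define L where "L = {m\<in>{1..M}. rej_iii M N v ch s m \<or> (acc_iii M N v ch s m \<and> mtch s m \<noteq> 0)}"
  have fin: "finite (Mt M N s)" "finite (Mt M N s')" "finite L"
    using finite_subset[OF Mt_sub] unfolding L_def by auto
  have sub: "Mt M N s - mtch s ` L \<subseteq> Mt M N s'"
  proof
    fix n assume n: "n \<in> Mt M N s - mtch s ` L"
    then obtain m where m: "m \<in> {1..M}" "mtch s m = n" "n \<in> {1..N}" unfolding Mt_def by auto
    have "m \<notin> L" using n m by auto
    then have nr: "\<not> rej_iii M N v ch s m" and na: "acc_iii M N v ch s m \<Longrightarrow> mtch s m = 0"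
      using m unfolding L_def by auto
    have "\<not> case_ii M N v s m" using m unfolding case_ii_def by auto
    moreover have "\<not> acc_iii M N v ch s m" using na m by auto
    ultimately have "mtch s' m = n" using nr m unfolding s'_def iter_simps by auto
    then show "n \<in> Mt M N s'" using m unfolding Mt_def by auto
  qed
  have cA: "card (Mt M N s) \<le> card (Mt M N s - mtch s ` L) + card L"
  proof -
    have "card (Mt M N s) \<le> card ((Mt M N s - mtch s ` L) \<union> mtch s ` L)"
      by (rule card_mono) (use fin in auto)
    also have "\<dots> \<le> card (Mt M N s - mtch s ` L) + card (mtch s ` L)" by (rule card_Un_le)
    also have "\<dots> \<le> card (Mt M N s - mtch s ` L) + card L" using card_image_le fin by auto
    finally show ?thesis .
  qed
  have card1: "card (Mt M N s - mtch s ` L) \<le> card (Mt M N s')"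
    by (rule card_mono[OF fin(2) sub])
  have card2: "(\<forall>m\<in>{1..M}. \<not> rej_iii M N v ch s m) \<Longrightarrow>
      card (Mt M N s - mtch s ` L) + 1 \<le> card (Mt M N s')"
  proof -
    assume nr: "\<forall>m\<in>{1..M}. \<not> rej_iii M N v ch s m"
    obtain m n where p: "props M N v s m n" using np unfolding no_proposal_def by auto
    then have mn: "m \<in> {1..M}" "n \<in> {1..N}" "d2d_unmatched M (mtch s) n"
      unfolding props_def by auto
    have nMt: "n \<notin> Mt M N s" using mn unfolding Mt_def d2d_unmatched_def by auto
    have nMt': "n \<in> Mt M N s'"
    proof (cases "props2 M N v ch s m n")
      case False
      then obtain m' where m': "case_ii M N v s m'" "ch m' = n"
        using p unfolding props2_def by auto
      then have "mtch s' m' = n" "m' \<in> {1..M}" unfolding s'_def iter_simps case_ii_def by auto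
      then show ?thesis using mn unfolding Mt_def by auto
    next
      case True
      have c1: "cnt N (props2 M N v ch s) m \<ge> 1" using cnt_pos[of n N "props2 M N v ch s" m, OF mn(2) True] .
      have "cnt N (props M N v s) m \<ge> 1" using cnt_pos[of n N "props M N v s" m, OF mn(2) p] .
      then have nc: "\<not> case_ii M N v s m" unfolding case_ii_def by auto
      have acc: "acc_iii M N v ch s m"
        using nr mn(1) c1 nc unfolding rej_iii_def by auto
      then have "cnt N (props2 M N v ch s) m = 1" unfolding acc_iii_def by auto
      then have "(THE n. n \<in> {1..N} \<and> props2 M N v ch s m n) = n"
        using cnt_one_the mn(2) True by metis
      then have "mtch s' m = n" using acc nc unfolding s'_def iter_simps by auto
      then show ?thesis using mn unfolding Mt_def by auto
    qed
    have "insert n (Mt M N s - mtch s ` L) \<subseteq> Mt M N s'" using sub nMt' by auto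
    then have "card (insert n (Mt M N s - mtch s ` L)) \<le> card (Mt M N s')"
      by (rule card_mono[OF fin(2)])
    moreover have "card (insert n (Mt M N s - mtch s ` L)) = card (Mt M N s - mtch s ` L) + 1"
      using nMt fin by simp
    ultimately show ?thesis by simp
  qed
  define R where "R = (\<Sum>m\<in>{1..M}. if rej_iii M N v ch s m then (1::real) else 0)"
  have cardR: "real (card (Mt M N s)) + 1 \<le> real (card (Mt M N s')) + real (card L) + R"
  proof (cases "\<forall>m\<in>{1..M}. \<not> rej_iii M N v ch s m")
    case True
    have "R \<ge> 0" unfolding R_def by (rule sum_nonneg) auto
    then show ?thesis using card2[OF True] cA by linarith
  next
    case False
    then obtain m0 where m0: "m0 \<in> {1..M}" "rej_iii M N v ch s m0" by auto
    have "R \<ge> (if rej_iii M N v ch s m0 then (1::real) else 0)"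
      unfolding R_def by (rule member_le_sum) (use m0 in auto)
    then have "R \<ge> 1" using m0 by simp
    then show ?thesis using card1 cA by linarith
  qed
  have permm: "2 * beta s' m + price s' m - (2 * beta s m + price s m)
      \<ge> eps * ((if m \<in> L then 1 else 0) + (if rej_iii M N v ch s m then 1 else 0))"
    if m: "m \<in> {1..M}" for m
  proof -
    have Im: "(beta s m = beta_prev s m \<or> beta s m = beta_prev s m + eps) \<and>
      beta_prev s m \<le> beta s m \<and>
      (price s m = beta s m \<or> price s m \<le> beta s m - eps) \<and>
      price s m \<le> beta_prev s m" using I unfolding inv_def by blast
    show ?thesis
    proof (cases "rej_iii M N v ch s m")
      case True
      then show ?thesis using excl(2)[OF True] m eps unfolding s'_def iter_simps L_def by auto
    next
      case nr: False
      show ?thesis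
      proof (cases "acc_iii M N v ch s m")
        case True
        note nc = excl(1)[OF True]
        show ?thesis
        proof (cases "mtch s m = 0")
          case True
          then show ?thesis using nr nc \<open>acc_iii M N v ch s m\<close> Im m eps
            unfolding s'_def iter_simps L_def by auto
        next
          case False
          then have "price s m < beta s m" using \<open>acc_iii M N v ch s m\<close> unfolding acc_iii_def by auto
          then have "price s m \<le> beta s m - eps" using Im by auto
          then show ?thesis using False nr nc \<open>acc_iii M N v ch s m\<close> m eps
            unfolding s'_def iter_simps L_def by auto
        qed
      next
        case na: False
        then show ?thesis using nr Im m eps unfolding s'_def iter_simps L_def by auto
      qed
    qed
  qed
  have sumL: "(\<Sum>m\<in>{1..M}. (if m \<in> L then (1::real) else 0)) = real (card L)"
  proof -
    have "L = {m \<in> {1..M}. m \<in> L}" unfolding L_def by auto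
    then have "real (card L) = (\<Sum>m\<in>{m \<in> {1..M}. m \<in> L}. (1::real))" by simp
    also have "\<dots> = (\<Sum>m\<in>{1..M}. (if m \<in> L then (1::real) else 0))"
      by (rule sum.inter_filter) simp
    finally show ?thesis by simp
  qed
  have "(\<Sum>m\<in>{1..M}. 2 * beta s' m + price s' m) - (\<Sum>m\<in>{1..M}. 2 * beta s m + price s m)
      = (\<Sum>m\<in>{1..M}. 2 * beta s' m + price s' m - (2 * beta s m + price s m))"
    by (simp add: sum_subtractf)
  also have "\<dots> \<ge> (\<Sum>m\<in>{1..M}. eps * ((if m \<in> L then 1 else 0) + (if rej_iii M N v ch s m then 1 else 0)))"
    by (rule sum_mono) (use permm in auto)
  also have "(\<Sum>m\<in>{1..M}. eps * ((if m \<in> L then 1 else 0) + (if rej_iii M N v ch s m then 1 else 0)))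
      = eps * (real (card L) + R)"
    unfolding sum_distrib_left[symmetric] sum.distrib sumL R_def by simp
  finally have D: "(\<Sum>m\<in>{1..M}. 2 * beta s' m + price s' m) / eps
      - (\<Sum>m\<in>{1..M}. 2 * beta s m + price s m) / eps \<ge> real (card L) + R"
    using eps by (simp add: diff_divide_distrib[symmetric] pos_le_divide_eq mult.commute)
  show ?thesis using D cardR unfolding phi_def s'_def[symmetric] by linarith
qed


lemma phi_init: "phi M N eps dma_init = 0"
  unfolding phi_def Mt_def dma_init_def by simp

lemma phi_bound:
  assumes eps: "eps > 0" and I: "inv M eps V s"
  shows "phi M N eps s \<le> real N + 3 * real M * (max 0 (V + eps) / eps)"
proof -
  have "card (Mt M N s) \<le> card {1..N}" by (rule card_mono) (auto simp: Mt_def)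
  then have c: "real (card (Mt M N s)) \<le> real N" by simp
  have "(\<Sum>m\<in>{1..M}. 2 * beta s m + price s m) \<le> (\<Sum>m\<in>{1..M}. 3 * max 0 (V + eps))"
  proof (rule sum_mono)
    fix m assume m: "m \<in> {1..M}"
    have "beta_prev s m \<le> beta s m" "price s m \<le> beta_prev s m" "beta s m \<le> max 0 (V + eps)"
      using I m unfolding inv_def by blast+
    then show "2 * beta s m + price s m \<le> 3 * max 0 (V + eps)" by (smt (verit))
  qed
  also have "\<dots> = real M * (3 * max 0 (V + eps))" by simp
  finally have "(\<Sum>m\<in>{1..M}. 2 * beta s m + price s m) / eps \<le> real M * (3 * max 0 (V + eps)) / eps"
    using eps by (simp add: divide_right_mono)
  moreover have "real M * (3 * max 0 (V + eps)) / eps = 3 * real M * (max 0 (V + eps) / eps)"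
    by simp
  ultimately show ?thesis using c unfolding phi_def by linarith
qed

theorem proposition2:
  "\<exists>C>0. \<forall>(M::nat) (N::nat) (v::nat \<Rightarrow> nat \<Rightarrow> real) (eps::real) (s::nat \<Rightarrow> dma_state).
     1 \<le> M \<longrightarrow> 1 \<le> N \<longrightarrow> eps > 0 \<longrightarrow>
     s 1 = dma_init \<longrightarrow>
     (\<forall>t\<ge>1. dma_step M N v eps (s t) (s (Suc t))) \<longrightarrow>
     (\<forall>t\<ge>1. no_ties M N v (beta (s t))) \<longrightarrow>
     (\<exists>T\<ge>1. no_proposal M N v (s T) \<and>
        real T \<le> C * real M * real N *
          max 1 (Max {v m n | m n. m \<in> {1..M} \<and> n \<in> {1..N}} / eps))"
proof (rule exI[of _ 9], intro conjI allI impI)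
  fix M N :: nat and v :: "nat \<Rightarrow> nat \<Rightarrow> real" and eps :: real and s :: "nat \<Rightarrow> dma_state"
  assume M1: "1 \<le> M" and N1: "1 \<le> N" and eps: "eps > 0" and s1: "s 1 = dma_init"
    and st: "\<forall>t\<ge>1. dma_step M N v eps (s t) (s (Suc t))"
  define V where "V = Max {v m n | m n. m \<in> {1..M} \<and> n \<in> {1..N}}"
  have setfin: "finite {v m n | m n. m \<in> {1..M} \<and> n \<in> {1..N}}"
  proof -
    have "{v m n | m n. m \<in> {1..M} \<and> n \<in> {1..N}} \<subseteq> (\<lambda>(m, n). v m n) ` ({1..M} \<times> {1..N})"
      by force
    then show ?thesis by (rule finite_subset) simp
  qed
  have Vb: "\<forall>m\<in>{1..M}. \<forall>n\<in>{1..N}. v m n \<le> V"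
  proof (intro ballI)
    fix m n assume "m \<in> {1..M}" "n \<in> {1..N}"
    then have "v m n \<in> {v m n | m n. m \<in> {1..M} \<and> n \<in> {1..N}}" by blast
    then show "v m n \<le> V" unfolding V_def by (rule Max_ge[OF setfin])
  qed
  have stepk: "\<exists>ch. s (Suc (Suc k)) = dma_iter M N v eps ch (s (Suc k))" for k
    using st[rule_format, of "Suc k"] unfolding dma_step_def by auto
  have invs: "inv M eps V (s (Suc k))" for k
  proof (induction k)
    case 0 then show ?case using s1 inv_init by simp
  next
    case (Suc k)
    obtain ch where "s (Suc (Suc k)) = dma_iter M N v eps ch (s (Suc k))" using stepk by blast
    then show ?case using inv_step[OF eps Vb Suc.IH] by simp
  qed
  have grow: "(\<forall>j<k. \<not> no_proposal M N v (s (Suc j))) \<longrightarrow> phi M N eps (s (Suc k)) \<ge> real k" for k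
  proof (induction k)
    case 0 then show ?case using s1 phi_init by simp
  next
    case (Suc k)
    show ?case
    proof
      assume a: "\<forall>j<Suc k. \<not> no_proposal M N v (s (Suc j))"
      then have "phi M N eps (s (Suc k)) \<ge> real k" using Suc.IH by auto
      moreover obtain ch where e: "s (Suc (Suc k)) = dma_iter M N v eps ch (s (Suc k))" using stepk by blast
      moreover have "\<not> no_proposal M N v (s (Suc k))" using a by auto
      then have "phi M N eps (dma_iter M N v eps ch (s (Suc k))) \<ge> phi M N eps (s (Suc k)) + 1"
        by (rule phi_step[OF eps invs])
      ultimately show "phi M N eps (s (Suc (Suc k))) \<ge> real (Suc k)" by simp
    qed
  qed
  define B where "B = real N + 3 * real M * (max 0 (V + eps) / eps)"
  define K where "K = nat \<lceil>B\<rceil> + 1"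
  have "\<exists>j<K. no_proposal M N v (s (Suc j))"
  proof (rule ccontr)
    assume "\<not> ?thesis"
    then have "phi M N eps (s (Suc K)) \<ge> real K" using grow by auto
    moreover have "phi M N eps (s (Suc K)) \<le> B" unfolding B_def using phi_bound[OF eps invs] .
    moreover have "real K > B" unfolding K_def by linarith
    ultimately show False by linarith
  qed
  then obtain j where j: "j < K" "no_proposal M N v (s (Suc j))" by blast
  define X where "X = max 1 (V / eps)"
  have X1: "X \<ge> 1" unfolding X_def by simp
  have BX: "max 0 (V + eps) / eps \<le> X + 1"
  proof (cases "V + eps \<ge> 0")
    case True
    then have "max 0 (V + eps) / eps = V / eps + 1" using eps by (simp add: add_divide_distrib)
    then show ?thesis unfolding X_def by linarith
  next
    case False then show ?thesis using X1 by simp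
  qed
  have B0: "B \<ge> 0" unfolding B_def using eps by simp
  have TK: "real (Suc j) \<le> B + 2"
  proof -
    have "real (Suc j) \<le> real K" using j by simp
    also have "\<dots> \<le> B + 2" unfolding K_def using B0 by linarith
    finally show ?thesis .
  qed
  have mM: "real M \<ge> 1" "real N \<ge> 1" using M1 N1 by auto
  have p1: "real M * real N \<ge> real N" using mM by (simp add: mult_le_cancel_right1)
  have p2: "real M * real N \<ge> real M" using mM by (simp add: mult_le_cancel_left1)
  have "real M * real N * 1 \<le> real M * real N * X"
    by (rule mult_left_mono[OF X1]) (use mM in simp)
  then have p3: "real M * real N * X \<ge> real M * real N" by simp
  have "real M * X * 1 \<le> real M * X * real N"
    by (rule mult_left_mono) (use mM X1 in simp_all)
  then have p4: "real M * real N * X \<ge> real M * X" by (simp add: algebra_simps)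
  have "3 * real M * (max 0 (V + eps) / eps) \<le> 3 * real M * (X + 1)"
    by (rule mult_left_mono[OF BX]) simp
  then have "B + 2 \<le> real N + 3 * real M * (X + 1) + 2"
    unfolding B_def by linarith
  also have "\<dots> = real N + 3 * (real M * X) + 3 * real M + 2" by (simp add: algebra_simps)
  also have "\<dots> \<le> 9 * (real M * real N * X)"
    using p1 p2 p3 p4 mM by linarith
  finally have "real (Suc j) \<le> 9 * real M * real N * X" using TK by (simp add: mult.assoc)
  then show "\<exists>T\<ge>1. no_proposal M N v (s T) \<and>
        real T \<le> 9 * real M * real N * max 1 (Max {v m n | m n. m \<in> {1..M} \<and> n \<in> {1..N}} / eps)"
    using j unfolding X_def V_def by (intro exI[of _ "Suc j"]) auto
qed (simp)

end
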